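(* Let $\{D'_i\}_{i\in\mathbb{Z}}$ be a stationary sequence of non-negative integer-valued random variables with $D'_i\sim G$, and connect the stubs according to the Coin Toss (CT) rule with degrees $D'_i$. If $G$ has bounded support, then the total length $T$ of all edges at the origin satisfies $\mathbb{E}[T]<\infty$.
   Context: Stationary means the law of $\{D'_i\}$ is invariant under index shifts. CT rule: attach $D'_i$ stubs $s_{i,1},\dots,s_{i,D'_i}$ to vertex $i$. For $j\ge1$ let $\Gamma_j=\{i\in\mathbb{Z}:D'_i\ge j\}$; the stubs $s_{i,j}$, $i\in\Gamma_j$, form level $j$. For each level $j$ separately (with independent fair coin tosses, independent of the degrees) the level-$j$ stubs are given directions alternating right, left, right, left, \dots along $\Gamma_j$ in increasing order, the direction of the stub at the first vertex $i\ge0$ of $\Gamma_j$ being determined by a fair coin. A level-$j$ stub at $i$ pointing right (left) is joined to the level-$j$ stub at the $(2j-1)$-th vertex of $\Gamma_j$ to the right (left) of $i$, producing an edge. The length of an edge $\{i,k\}$ is $|i-k|$; $T$ is the total length of all edges at vertex $0$. *)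

theory Defs
  imports "HOL-Probability.Probability"
begin

text \<open>Deterministic description of the Coin Toss (CT) rule, given a degree
  sequence d (vertex i has d i stubs) and a coin sequence c (c j is the coin
  for level j; c j = True means the stub at the first vertex i \<ge> 0 of level j
  points right).\<close>

definition level :: "(int \<Rightarrow> nat) \<Rightarrow> nat \<Rightarrow> int set" where
  "level d j = {i. j \<le> d i}"

definition first_nonneg :: "int set \<Rightarrow> int" where
  "first_nonneg S = (LEAST x. x \<in> S \<and> 0 \<le> x)"

definition rank :: "int set \<Rightarrow> int \<Rightarrow> int" where
  "rank S i = (let p = first_nonneg S in
     if p \<le> i then int (card {y\<in>S. p \<le> y \<and> y < i})
     else - int (card {y\<in>S. i \<le> y \<and> y < p}))"

definition points_right :: "(int \<Rightarrow> nat) \<Rightarrow> (nat \<Rightarrow> bool) \<Rightarrow> nat \<Rightarrow> int \<Rightarrow> bool" where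
  "points_right d c j i = (even (rank (level d j) i) \<longleftrightarrow> c j)"

definition kth_right :: "int set \<Rightarrow> int \<Rightarrow> nat \<Rightarrow> int option" where
  "kth_right S i k =
     (if \<exists>x\<in>S. i < x \<and> card {y\<in>S. i < y \<and> y \<le> x} = k
      then Some (THE x. x \<in> S \<and> i < x \<and> card {y\<in>S. i < y \<and> y \<le> x} = k)
      else None)"

definition kth_left :: "int set \<Rightarrow> int \<Rightarrow> nat \<Rightarrow> int option" where
  "kth_left S i k =
     (if \<exists>x\<in>S. x < i \<and> card {y\<in>S. x \<le> y \<and> y < i} = k
      then Some (THE x. x \<in> S \<and> x < i \<and> card {y\<in>S. x \<le> y \<and> y < i} = k)
      else None)"

definition partner :: "(int \<Rightarrow> nat) \<Rightarrow> (nat \<Rightarrow> bool) \<Rightarrow> nat \<Rightarrow> int \<Rightarrow> int option" where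
  "partner d c j i =
     (if points_right d c j i then kth_right (level d j) i (2*j - 1)
      else kth_left (level d j) i (2*j - 1))"

text \<open>Length of the edge formed by the level-j stub at i (0 in the degenerate,
  almost surely impossible case where no partner exists).\<close>
definition stub_length :: "(int \<Rightarrow> nat) \<Rightarrow> (nat \<Rightarrow> bool) \<Rightarrow> nat \<Rightarrow> int \<Rightarrow> nat" where
  "stub_length d c j i = (case partner d c j i of None \<Rightarrow> 0 | Some k \<Rightarrow> nat \<bar>i - k\<bar>)"

definition total_length_origin :: "(int \<Rightarrow> nat) \<Rightarrow> (nat \<Rightarrow> bool) \<Rightarrow> nat" where
  "total_length_origin d c = (\<Sum>j\<in>{1..d 0}. stub_length d c j 0)"

end

theory Submission
  imports Defs
begin


abbreviation "PP \<equiv> PiM UNIV (\<lambda>_::int. count_space (UNIV::nat set))"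

lemma meas_card:
  assumes "finite A"
  shows "(\<lambda>d. card {y\<in>A. j \<le> d y}) \<in> PP \<rightarrow>\<^sub>M count_space UNIV"
  using assms
proof (induction A rule: finite_induct)
  case empty
  then show ?case by simp
next
  case (insert a A)
  have eq: "(\<lambda>d. card {y\<in>insert a A. j \<le> d y}) =
     (\<lambda>d. (\<lambda>c d. if j \<le> d a then Suc c else c) (card {y\<in>A. j \<le> d y}) d)"
  proof
    fix d :: "int \<Rightarrow> nat"
    have fin: "finite {y\<in>A. j \<le> d y}" using insert by simp
    show "card {y\<in>insert a A. j \<le> d y} = (if j \<le> d a then Suc (card {y\<in>A. j \<le> d y}) else card {y\<in>A. j \<le> d y})"
    proof (cases "j \<le> d a")
      case True
      then have "{y\<in>insert a A. j \<le> d y} = insert a {y\<in>A. j \<le> d y}" by auto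
      then show ?thesis using True fin insert(2) by simp
    next
      case False
      then have "{y\<in>insert a A. j \<le> d y} = {y\<in>A. j \<le> d y}" by auto
      then show ?thesis using False by simp
    qed
  qed
  show ?case unfolding eq
  proof (rule measurable_compose_countable[OF _ insert(3)])
    fix c
    show "(\<lambda>d::int\<Rightarrow>nat. if j \<le> d a then Suc c else c) \<in> PP \<rightarrow>\<^sub>M count_space UNIV"
      by (rule measurable_compose[OF measurable_component_singleton[of a UNIV]]) auto
  qed
qed

lemma meas_pred:
  assumes "finite A"
  shows "(\<lambda>d. ennreal (of_bool (j \<le> d k \<and> card {y\<in>A. j \<le> d y} < m))) \<in> borel_measurable PP"
proof -
  have "(\<lambda>d. (\<lambda>c d. ennreal (of_bool (j \<le> d k \<and> c < m))) (card {y\<in>A. j \<le> d y}) d) \<in> borel_measurable PP"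
  proof (rule measurable_compose_countable[OF _ meas_card[OF assms]])
    fix c
    show "(\<lambda>d::int\<Rightarrow>nat. ennreal (of_bool (j \<le> d k \<and> c < m))) \<in> borel_measurable PP"
      by (rule measurable_compose[OF measurable_component_singleton[of k UNIV]]) auto
  qed
  then show ?thesis by simp
qed



lemma comb_right:
  assumes "finite A" "\<forall>n\<in>A. j \<le> d (- int n) \<and> card {z\<in>{1 - int n..0}. j \<le> d z} < m"
  shows "card A \<le> m"
proof (cases "A = {}")
  case True then show ?thesis by simp
next
  case False
  define N where "N = Max A"
  have NA: "N \<in> A" using False assms(1) N_def by simp
  have sub: "(\<lambda>n. - int n) ` (A - {N}) \<subseteq> {z\<in>{1 - int N..0}. j \<le> d z}"
  proof
    fix z assume "z \<in> (\<lambda>n. - int n) ` (A - {N})"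
    then obtain n where n: "n \<in> A" "n \<noteq> N" "z = - int n" by auto
    have "n \<le> N" using n assms(1) N_def by simp
    then show "z \<in> {z\<in>{1 - int N..0}. j \<le> d z}" using n assms(2) by auto
  qed
  have "card (A - {N}) = card ((\<lambda>n. - int n) ` (A - {N}))"
    by (rule card_image[symmetric]) (auto simp: inj_on_def)
  also have "\<dots> \<le> card {z\<in>{1 - int N..0}. j \<le> d z}" by (rule card_mono[OF _ sub]) (rule finite_subset[OF _ finite_atLeastAtMost_int[of "1 - int N" 0]], auto)
  also have "\<dots> < m" using assms(2) NA by blast
  finally have "card (A - {N}) < m" .
  moreover have "card A = Suc (card (A - {N}))" using NA assms(1)
    by (metis card_Suc_Diff1)
  ultimately show ?thesis by simp
qed

lemma comb_left:
  assumes "finite A" "\<forall>n\<in>A. j \<le> d (int n) \<and> card {z\<in>{0..int n - 1}. j \<le> d z} < m"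
  shows "card A \<le> m"
proof (cases "A = {}")
  case True then show ?thesis by simp
next
  case False
  define N where "N = Max A"
  have NA: "N \<in> A" using False assms(1) N_def by simp
  have sub: "int ` (A - {N}) \<subseteq> {z\<in>{0..int N - 1}. j \<le> d z}"
  proof
    fix z assume "z \<in> int ` (A - {N})"
    then obtain n where n: "n \<in> A" "n \<noteq> N" "z = int n" by auto
    have "n \<le> N" using n assms(1) N_def by simp
    then show "z \<in> {z\<in>{0..int N - 1}. j \<le> d z}" using n assms(2) by auto
  qed
  have "card (A - {N}) = card (int ` (A - {N}))"
    by (rule card_image[symmetric]) (auto simp: inj_on_def)
  also have "\<dots> \<le> card {z\<in>{0..int N - 1}. j \<le> d z}" by (rule card_mono[OF _ sub]) (rule finite_subset[OF _ finite_atLeastAtMost_int[of 0 "int N - 1"]], auto)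
  also have "\<dots> < m" using assms(2) NA by blast
  finally have "card (A - {N}) < m" .
  moreover have "card A = Suc (card (A - {N}))" using NA assms(1)
    by (metis card_Suc_Diff1)
  ultimately show ?thesis by simp
qed

lemma suminf_bool_le:
  assumes "\<And>A. finite A \<Longrightarrow> A \<subseteq> {n. Q n} \<Longrightarrow> card A \<le> m"
  shows "(\<Sum>n. ennreal (of_bool (Q n))) \<le> of_nat m"
proof (rule suminf_le_const)
  show "summable (\<lambda>n. ennreal (of_bool (Q n)))" by simp
  fix N
  have "(\<Sum>n<N. ennreal (of_bool (Q n))) = of_nat (card {n\<in>{..<N}. Q n})"
    by (simp add: of_bool_def sum.If_cases ennreal_of_nat_eq_real_of_nat Int_def conj_commute)
  also have "\<dots> \<le> of_nat m" using assms[of "{n\<in>{..<N}. Q n}"] by auto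
  finally show "(\<Sum>n<N. ennreal (of_bool (Q n))) \<le> of_nat m" .
qed

lemma shift_nn:
  assumes D_meas: "\<And>i. D i \<in> measurable M (count_space UNIV)"
    and stationary: "\<And>k::int.
      distr M PP (\<lambda>\<omega> i. D (i + k) \<omega>) = distr M PP (\<lambda>\<omega> i. D i \<omega>)"
    and h: "h \<in> borel_measurable PP"
  shows "(\<integral>\<^sup>+\<omega>. h (\<lambda>i. D (i + k) \<omega>) \<partial>M) = (\<integral>\<^sup>+\<omega>. h (\<lambda>i. D i \<omega>) \<partial>M)"
proof -
  have m1: "(\<lambda>\<omega> i. D (i + k) \<omega>) \<in> M \<rightarrow>\<^sub>M PP" for k
    by (rule measurable_PiM_single') (auto intro: D_meas)
  have "(\<integral>\<^sup>+\<omega>. h (\<lambda>i. D (i + k) \<omega>) \<partial>M) = integral\<^sup>N (distr M PP (\<lambda>\<omega> i. D (i + k) \<omega>)) h"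
    by (rule nn_integral_distr[symmetric]) (use m1 h in auto)
  also have "\<dots> = integral\<^sup>N (distr M PP (\<lambda>\<omega> i. D (i + 0) \<omega>)) h"
    using stationary[of k] stationary[of 0] by simp
  also have "\<dots> = (\<integral>\<^sup>+\<omega>. h (\<lambda>i. D (i + 0) \<omega>) \<partial>M)"
    by (rule nn_integral_distr) (use m1[of 0] h in auto)
  finally show ?thesis by simp
qed

lemma integral_shift_sum:
  assumes P: "prob_space M"
    and D_meas: "\<And>i. D i \<in> measurable M (count_space UNIV)"
    and stationary: "\<And>k::int.
      distr M PP (\<lambda>\<omega> i. D (i + k) \<omega>) = distr M PP (\<lambda>\<omega> i. D i \<omega>)"
    and f: "\<And>n. f n \<in> borel_measurable PP"
    and bnd: "\<And>\<omega>. (\<Sum>n. f n (\<lambda>i. D (i + k n) \<omega>)) \<le> of_nat B"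
  shows "(\<integral>\<^sup>+\<omega>. (\<Sum>n. f n (\<lambda>i. D i \<omega>)) \<partial>M) \<le> of_nat B"
proof -
  have m1: "(\<lambda>\<omega> i. D (i + k) \<omega>) \<in> M \<rightarrow>\<^sub>M PP" for k
    by (rule measurable_PiM_single') (auto intro: D_meas)
  have m0: "(\<lambda>\<omega> i. D i \<omega>) \<in> M \<rightarrow>\<^sub>M PP"
    by (rule measurable_PiM_single') (auto intro: D_meas)
  have "(\<integral>\<^sup>+\<omega>. (\<Sum>n. f n (\<lambda>i. D i \<omega>)) \<partial>M) = (\<Sum>n. \<integral>\<^sup>+\<omega>. f n (\<lambda>i. D i \<omega>) \<partial>M)"
    by (rule nn_integral_suminf) (rule measurable_compose[OF m0 f])
  also have "\<dots> = (\<Sum>n. \<integral>\<^sup>+\<omega>. f n (\<lambda>i. D (i + k n) \<omega>) \<partial>M)"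
    using shift_nn[OF D_meas stationary f] by simp
  also have "\<dots> = (\<integral>\<^sup>+\<omega>. (\<Sum>n. f n (\<lambda>i. D (i + k n) \<omega>)) \<partial>M)"
    by (rule nn_integral_suminf[symmetric]) (rule measurable_compose[OF m1 f])
  also have "\<dots> \<le> (\<integral>\<^sup>+\<omega>. of_nat B \<partial>M)"
    by (rule nn_integral_mono) (rule bnd)
  also have "\<dots> = of_nat B" using prob_space.emeasure_space_1[OF P] by simp
  finally show ?thesis .
qed



definition fR :: "nat \<Rightarrow> nat \<Rightarrow> nat \<Rightarrow> (int \<Rightarrow> nat) \<Rightarrow> ennreal" where
  "fR j m n d = ennreal (of_bool (j \<le> d 0 \<and> card {y\<in>{1..int n}. j \<le> d y} < m))"
definition fL :: "nat \<Rightarrow> nat \<Rightarrow> nat \<Rightarrow> (int \<Rightarrow> nat) \<Rightarrow> ennreal" where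
  "fL j m n d = ennreal (of_bool (j \<le> d 0 \<and> card {y\<in>{- int n..-1}. j \<le> d y} < m))"

lemma sum_ones_le:
  assumes "\<And>n. n < N \<Longrightarrow> f n = 1"
  shows "of_nat N \<le> (\<Sum>n. f n :: ennreal)"
proof -
  have "of_nat N = (\<Sum>n<N. f n)" using assms by simp
  also have "\<dots> \<le> (\<Sum>n. f n)" by (rule sum_le_suminf) auto
  finally show ?thesis .
qed

lemma right_bound:
  assumes m: "1 \<le> m" and j0: "j \<le> d 0"
    and K: "kth_right {i. j \<le> d i} 0 m = Some x"
  shows "0 < x \<and> of_nat (nat x) \<le> (\<Sum>n. fR j m n d)"
proof -
  define S where "S = {i. j \<le> d i}"
  define P where "P x \<longleftrightarrow> x \<in> S \<and> 0 < x \<and> card {y\<in>S. 0 < y \<and> y \<le> x} = m" for x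
  have K': "(if \<exists>x\<in>S. 0 < x \<and> card {y\<in>S. 0 < y \<and> y \<le> x} = m
      then Some (THE x. x \<in> S \<and> 0 < x \<and> card {y\<in>S. 0 < y \<and> y \<le> x} = m) else None) = Some x"
    using K unfolding kth_right_def S_def by simp
  have ex0: "\<exists>x\<in>S. 0 < x \<and> card {y\<in>S. 0 < y \<and> y \<le> x} = m"
    using K' by (metis option.distinct(1))
  then have ex: "\<exists>x. P x" unfolding P_def by blast
  have xe: "x = (THE x. P x)" using K' ex0 unfolding P_def by simp
  have fin: "finite {y\<in>S. 0 < y \<and> y \<le> z}" for z
    by (rule finite_subset[OF _ finite_atLeastAtMost_int[of 1 z]]) auto
  have lt: "card {y\<in>S. 0 < y \<and> y \<le> a} < card {y\<in>S. 0 < y \<and> y \<le> b}"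
    if "a < b" "b \<in> S" "0 < a" for a b
  proof (rule psubset_card_mono[OF fin])
    have "{y\<in>S. 0 < y \<and> y \<le> a} \<subseteq> {y\<in>S. 0 < y \<and> y \<le> b}" using that(1) by auto
    moreover have "b \<in> {y\<in>S. 0 < y \<and> y \<le> b} - {y\<in>S. 0 < y \<and> y \<le> a}" using that by auto
    ultimately show "{y\<in>S. 0 < y \<and> y \<le> a} \<subset> {y\<in>S. 0 < y \<and> y \<le> b}" by blast
  qed
  have uniq: "a = b" if "P a" "P b" for a b
  proof (rule linorder_cases[of a b])
    assume "a < b" then show ?thesis using lt[of a b] that unfolding P_def by auto
  next
    assume "b < a" then show ?thesis using lt[of b a] that unfolding P_def by auto
  qed
  obtain x0 where x0: "P x0" using ex by blast
  have "(THE x. P x) = x0" by (rule the_equality) (use x0 uniq in blast)+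
  then have Px: "P x" using xe x0 by simp
  have "of_nat (nat x) \<le> (\<Sum>n. fR j m n d)"
  proof (rule sum_ones_le)
    fix n assume n: "n < nat x"
    have "{y\<in>{1..int n}. j \<le> d y} \<subseteq> {y\<in>S. 0 < y \<and> y \<le> x}"
      using n unfolding S_def by auto
    moreover have "x \<in> {y\<in>S. 0 < y \<and> y \<le> x} - {y\<in>{1..int n}. j \<le> d y}"
      using n Px unfolding P_def by auto
    ultimately have "{y\<in>{1..int n}. j \<le> d y} \<subset> {y\<in>S. 0 < y \<and> y \<le> x}" by blast
    then have "card {y\<in>{1..int n}. j \<le> d y} < m"
      using psubset_card_mono[OF fin] Px unfolding P_def by metis
    then show "fR j m n d = 1" using j0 by (simp add: fR_def)
  qed
  then show ?thesis using Px P_def by simp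
qed

lemma left_bound:
  assumes m: "1 \<le> m" and j0: "j \<le> d 0"
    and K: "kth_left {i. j \<le> d i} 0 m = Some x"
  shows "x < 0 \<and> of_nat (nat (- x)) \<le> (\<Sum>n. fL j m n d)"
proof -
  define S where "S = {i. j \<le> d i}"
  define P where "P x \<longleftrightarrow> x \<in> S \<and> x < 0 \<and> card {y\<in>S. x \<le> y \<and> y < 0} = m" for x
  have K': "(if \<exists>x\<in>S. x < 0 \<and> card {y\<in>S. x \<le> y \<and> y < 0} = m
      then Some (THE x. x \<in> S \<and> x < 0 \<and> card {y\<in>S. x \<le> y \<and> y < 0} = m) else None) = Some x"
    using K unfolding kth_left_def S_def by simp
  have ex0: "\<exists>x\<in>S. x < 0 \<and> card {y\<in>S. x \<le> y \<and> y < 0} = m"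
    using K' by (metis option.distinct(1))
  then have ex: "\<exists>x. P x" unfolding P_def by blast
  have xe: "x = (THE x. P x)" using K' ex0 unfolding P_def by simp
  have fin: "finite {y\<in>S. z \<le> y \<and> y < 0}" for z
    by (rule finite_subset[OF _ finite_atLeastAtMost_int[of z "-1"]]) auto
  have lt: "card {y\<in>S. b \<le> y \<and> y < 0} < card {y\<in>S. a \<le> y \<and> y < 0}"
    if "a < b" "a \<in> S" "b < 0" for a b
  proof (rule psubset_card_mono[OF fin])
    have "{y\<in>S. b \<le> y \<and> y < 0} \<subseteq> {y\<in>S. a \<le> y \<and> y < 0}" using that(1) by auto
    moreover have "a \<in> {y\<in>S. a \<le> y \<and> y < 0} - {y\<in>S. b \<le> y \<and> y < 0}" using that by auto
    ultimately show "{y\<in>S. b \<le> y \<and> y < 0} \<subset> {y\<in>S. a \<le> y \<and> y < 0}" by blast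
  qed
  have uniq: "a = b" if "P a" "P b" for a b
  proof (rule linorder_cases[of a b])
    assume "a < b" then show ?thesis using lt[of a b] that unfolding P_def by auto
  next
    assume "b < a" then show ?thesis using lt[of b a] that unfolding P_def by auto
  qed
  obtain x0 where x0: "P x0" using ex by blast
  have "(THE x. P x) = x0" by (rule the_equality) (use x0 uniq in blast)+
  then have Px: "P x" using xe x0 by simp
  have "of_nat (nat (- x)) \<le> (\<Sum>n. fL j m n d)"
  proof (rule sum_ones_le)
    fix n assume n: "n < nat (- x)"
    have "{y\<in>{- int n..-1}. j \<le> d y} \<subseteq> {y\<in>S. x \<le> y \<and> y < 0}"
      using n unfolding S_def by auto
    moreover have "x \<in> {y\<in>S. x \<le> y \<and> y < 0} - {y\<in>{- int n..-1}. j \<le> d y}"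
      using n Px unfolding P_def by auto
    ultimately have "{y\<in>{- int n..-1}. j \<le> d y} \<subset> {y\<in>S. x \<le> y \<and> y < 0}" by blast
    then have "card {y\<in>{- int n..-1}. j \<le> d y} < m"
      using psubset_card_mono[OF fin] Px unfolding P_def by metis
    then show "fL j m n d = 1" using j0 by (simp add: fL_def)
  qed
  then show ?thesis using Px P_def by simp
qed

lemma stub_bound:
  assumes "1 \<le> j" "j \<le> d 0"
  shows "ennreal (real (stub_length d c j 0)) \<le> (\<Sum>n. fR j (2*j-1) n d) + (\<Sum>n. fL j (2*j-1) n d)"
proof -
  have m: "1 \<le> 2*j-1" using assms by simp
  show ?thesis
  proof (cases "partner d c j 0")
    case None then show ?thesis by (simp add: stub_length_def)
  next
    case (Some x)
    show ?thesis
    proof (cases "points_right d c j 0")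
      case True
      then have "kth_right {i. j \<le> d i} 0 (2*j-1) = Some x"
        using Some by (simp add: partner_def level_def)
      from right_bound[OF m assms(2) this] have "0 < x" "of_nat (nat x) \<le> (\<Sum>n. fR j (2*j-1) n d)" by auto
      then have "ennreal (real (stub_length d c j 0)) \<le> (\<Sum>n. fR j (2*j-1) n d)"
        using Some by (simp add: stub_length_def ennreal_of_nat_eq_real_of_nat)
      then show ?thesis by (rule order_trans) simp
    next
      case False
      then have "kth_left {i. j \<le> d i} 0 (2*j-1) = Some x"
        using Some by (simp add: partner_def level_def)
      from left_bound[OF m assms(2) this] have "x < 0" "of_nat (nat (-x)) \<le> (\<Sum>n. fL j (2*j-1) n d)" by auto
      then have "ennreal (real (stub_length d c j 0)) \<le> (\<Sum>n. fL j (2*j-1) n d)"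
        using Some by (simp add: stub_length_def ennreal_of_nat_eq_real_of_nat)
      then show ?thesis by (rule order_trans) simp
    qed
  qed
qed


lemma card_shift:
  "card {y\<in>{a..b}. P (y + c)} = card {z\<in>{a + c..b + (c::int)}. P z}"
proof -
  have "{z\<in>{a + c..b + c}. P z} = (\<lambda>y. y + c) ` {y\<in>{a..b}. P (y + c)}"
  proof (rule set_eqI)
    fix z
    show "z \<in> {z\<in>{a + c..b + c}. P z} \<longleftrightarrow> z \<in> (\<lambda>y. y + c) ` {y\<in>{a..b}. P (y + c)}"
    proof
      assume "z \<in> {z\<in>{a + c..b + c}. P z}"
      then have "z - c \<in> {y\<in>{a..b}. P (y + c)}" by auto
      then show "z \<in> (\<lambda>y. y + c) ` {y\<in>{a..b}. P (y + c)}" by (rule rev_image_eqI) simp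
    qed auto
  qed
  moreover have "inj_on (\<lambda>y. y + c) {y\<in>{a..b}. P (y + c)}" by (auto simp: inj_on_def)
  ultimately show ?thesis by (simp add: card_image)
qed

theorem proposition2p3:
  fixes M :: "'a measure" and D :: "int \<Rightarrow> 'a \<Rightarrow> nat" and C :: "nat \<Rightarrow> 'a \<Rightarrow> bool"
  assumes "prob_space M"
    and D_meas: "\<And>i. D i \<in> measurable M (count_space UNIV)"
    and stationary: "\<And>k::int.
      distr M (PiM UNIV (\<lambda>_::int. count_space (UNIV::nat set))) (\<lambda>\<omega> i. D (i + k) \<omega>)
      = distr M (PiM UNIV (\<lambda>_::int. count_space (UNIV::nat set))) (\<lambda>\<omega> i. D i \<omega>)"
    and bounded_support: "\<exists>K::nat. \<forall>i. AE \<omega> in M. D i \<omega> \<le> K"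
    and C_meas: "\<And>j. C j \<in> measurable M (count_space UNIV)"
    and coins_iid_fair_indep_of_D:
      "distr M (PiM UNIV (\<lambda>_::int. count_space (UNIV::nat set))
                 \<Otimes>\<^sub>M PiM UNIV (\<lambda>_::nat. count_space (UNIV::bool set)))
             (\<lambda>\<omega>. (\<lambda>i. D i \<omega>, \<lambda>j. C j \<omega>))
       = distr M (PiM UNIV (\<lambda>_::int. count_space (UNIV::nat set))) (\<lambda>\<omega> i. D i \<omega>)
         \<Otimes>\<^sub>M PiM UNIV (\<lambda>_::nat. measure_pmf (bernoulli_pmf (1/2)))"
  shows "(\<integral>\<^sup>+ \<omega>. ennreal (real (total_length_origin (\<lambda>i. D i \<omega>) (\<lambda>j. C j \<omega>))) \<partial>M) < \<infinity>"
proof -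
  obtain K :: nat where AEK: "AE \<omega> in M. D 0 \<omega> \<le> K" using bounded_support by blast
  define G where "G j \<omega> = (\<Sum>n. fR j (2*j-1) n (\<lambda>i. D i \<omega>)) + (\<Sum>n. fL j (2*j-1) n (\<lambda>i. D i \<omega>))" for j \<omega>
  have pt: "ennreal (real (total_length_origin (\<lambda>i. D i \<omega>) (\<lambda>j. C j \<omega>))) \<le> (\<Sum>j\<in>{1..K}. G j \<omega>)"
    if "D 0 \<omega> \<le> K" for \<omega>
  proof -
    let ?f = "\<lambda>j. stub_length (\<lambda>i. D i \<omega>) (\<lambda>j. C j \<omega>) j 0"
    have "ennreal (real (total_length_origin (\<lambda>i. D i \<omega>) (\<lambda>j. C j \<omega>))) = of_nat (\<Sum>j\<in>{1..D 0 \<omega>}. ?f j)"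
      by (simp add: total_length_origin_def ennreal_of_nat_eq_real_of_nat)
    also have "\<dots> = (\<Sum>j\<in>{1..D 0 \<omega>}. of_nat (?f j))" by (rule of_nat_sum)
    also have "\<dots> = (\<Sum>j\<in>{1..D 0 \<omega>}. ennreal (real (?f j)))" by (simp add: ennreal_of_nat_eq_real_of_nat)
    also have "\<dots> \<le> (\<Sum>j\<in>{1..D 0 \<omega>}. G j \<omega>)"
      by (rule sum_mono) (use stub_bound in \<open>auto simp: G_def\<close>)
    also have "\<dots> \<le> (\<Sum>j\<in>{1..K}. G j \<omega>)" by (rule sum_mono2) (use that in auto)
    finally show ?thesis .
  qed
  have m0: "(\<lambda>\<omega> i. D i \<omega>) \<in> M \<rightarrow>\<^sub>M PP"
    by (rule measurable_PiM_single') (auto intro: D_meas)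
  have fRm: "fR j m n \<in> borel_measurable PP" for j m n
    unfolding fR_def[abs_def] by (rule meas_pred) simp
  have fLm: "fL j m n \<in> borel_measurable PP" for j m n
    unfolding fL_def[abs_def] by (rule meas_pred) simp
  have mR: "(\<lambda>\<omega>. (\<Sum>n. fR j m n (\<lambda>i. D i \<omega>))) \<in> borel_measurable M" for j m
    by (rule borel_measurable_suminf_order) (rule measurable_compose[OF m0 fRm])
  have mL: "(\<lambda>\<omega>. (\<Sum>n. fL j m n (\<lambda>i. D i \<omega>))) \<in> borel_measurable M" for j m
    by (rule borel_measurable_suminf_order) (rule measurable_compose[OF m0 fLm])
  have mG: "G j \<in> borel_measurable M" for j
    unfolding G_def[abs_def] by (intro borel_measurable_add mR mL)
  have bR: "(\<integral>\<^sup>+\<omega>. (\<Sum>n. fR j m n (\<lambda>i. D i \<omega>)) \<partial>M) \<le> of_nat m" for j m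
  proof (rule integral_shift_sum[OF assms(1) D_meas stationary fRm, where k = "\<lambda>n. - int n"])
    fix \<omega>
    let ?d = "\<lambda>i. D i \<omega>"
    show "(\<Sum>n. fR j m n (\<lambda>i. D (i + - int n) \<omega>)) \<le> of_nat m"
    proof -
      have eq: "fR j m n (\<lambda>i. D (i + - int n) \<omega>) =
        ennreal (of_bool (j \<le> ?d (- int n) \<and> card {z\<in>{1 - int n..0}. j \<le> ?d z} < m))" for n
        using card_shift[of 1 "int n" "\<lambda>y. j \<le> D y \<omega>" "- int n"] by (simp add: fR_def)
      show ?thesis unfolding eq
        by (rule suminf_bool_le, rule comb_right[where d = "\<lambda>i. D i \<omega>" and j = j]) auto
    qed
  qed
  have bL: "(\<integral>\<^sup>+\<omega>. (\<Sum>n. fL j m n (\<lambda>i. D i \<omega>)) \<partial>M) \<le> of_nat m" for j m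
  proof (rule integral_shift_sum[OF assms(1) D_meas stationary fLm, where k = "\<lambda>n. int n"])
    fix \<omega>
    let ?d = "\<lambda>i. D i \<omega>"
    show "(\<Sum>n. fL j m n (\<lambda>i. D (i + int n) \<omega>)) \<le> of_nat m"
    proof -
      have eq: "fL j m n (\<lambda>i. D (i + int n) \<omega>) =
        ennreal (of_bool (j \<le> ?d (int n) \<and> card {z\<in>{0..int n - 1}. j \<le> ?d z} < m))" for n
        using card_shift[of "- int n" "-1" "\<lambda>y. j \<le> D y \<omega>" "int n"] by (simp add: fL_def)
      show ?thesis unfolding eq
        by (rule suminf_bool_le, rule comb_left[where d = "\<lambda>i. D i \<omega>" and j = j]) auto
    qed
  qed
  have "(\<integral>\<^sup>+ \<omega>. ennreal (real (total_length_origin (\<lambda>i. D i \<omega>) (\<lambda>j. C j \<omega>))) \<partial>M)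
      \<le> (\<integral>\<^sup>+ \<omega>. (\<Sum>j\<in>{1..K}. G j \<omega>) \<partial>M)"
    by (rule nn_integral_mono_AE) (use AEK pt in auto)
  also have "\<dots> = (\<Sum>j\<in>{1..K}. integral\<^sup>N M (G j))"
    by (rule nn_integral_sum) (rule mG)
  also have "\<dots> \<le> (\<Sum>j\<in>{1..K}. of_nat (2*j-1) + of_nat (2*j-1))"
  proof (rule sum_mono)
    fix j
    have "integral\<^sup>N M (G j) = (\<integral>\<^sup>+\<omega>. (\<Sum>n. fR j (2*j-1) n (\<lambda>i. D i \<omega>)) \<partial>M)
        + (\<integral>\<^sup>+\<omega>. (\<Sum>n. fL j (2*j-1) n (\<lambda>i. D i \<omega>)) \<partial>M)"
      unfolding G_def by (rule nn_integral_add[OF mR mL])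
    also have "\<dots> \<le> of_nat (2*j-1) + of_nat (2*j-1)" by (rule add_mono[OF bR bL])
    finally show "integral\<^sup>N M (G j) \<le> of_nat (2*j-1) + of_nat (2*j-1)" .
  qed
  also have "\<dots> < \<infinity>" by (simp add: of_nat_less_top)
  finally show ?thesis .
qed

end
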